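(* Assume superclub holds. Then for every collection $\{C_\alpha:\alpha<\omega_2\}$ of club subsets of $\omega_1$ there are pairwise distinct ordinals $\beta_\xi<\omega_2$ ($\xi<\omega_1$) such that $\bigcap_{\xi<\omega_1}C_{\beta_\xi}$ is a club subset of $\omega_1$.
   Context: A superclub sequence is a sequence $\langle A_\delta:\delta\in\lim(\omega_1)\rangle$ such that each $A_\delta$ is a cofinal subset of $\delta$ and for every unbounded $x\subseteq\omega_1$ there is an unbounded $y\subseteq x$ such that $\{\delta<\omega_1: y\cap\delta=A_\delta\}$ is stationary in $\omega_1$. Superclub (at $\aleph_1$) means a superclub sequence exists. *)

theory Defs
  imports Main "HOL-Library.Countable_Set"
begin

text \<open>omega_1 is modelled by a well-ordered type that is uncountable and all of
whose proper initial segments are countable; omega_2 by a well-ordered type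
that does not inject into omega_1 but all of whose proper initial segments do.\<close>

definition is_omega1_type :: "'a::wellorder itself \<Rightarrow> bool" where
  "is_omega1_type _ \<longleftrightarrow> uncountable (UNIV :: 'a set) \<and> (\<forall>x::'a. countable {..<x})"

definition is_omega2_type :: "'b::wellorder itself \<Rightarrow> 'a::wellorder itself \<Rightarrow> bool" where
  "is_omega2_type _ _ \<longleftrightarrow>
     (\<forall>x::'b. \<exists>f::'b \<Rightarrow> 'a. inj_on f {..<x}) \<and> \<not> (\<exists>f::'b \<Rightarrow> 'a. inj f)"

definition is_limit :: "'a::wellorder \<Rightarrow> bool" where
  "is_limit \<delta> \<longleftrightarrow> (\<exists>\<gamma>. \<gamma> < \<delta>) \<and> (\<forall>\<gamma><\<delta>. \<exists>\<eta>. \<gamma> < \<eta> \<and> \<eta> < \<delta>)"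

definition cofinal_in :: "'a::wellorder set \<Rightarrow> 'a \<Rightarrow> bool" where
  "cofinal_in A \<delta> \<longleftrightarrow> A \<subseteq> {..<\<delta>} \<and> (\<forall>\<gamma><\<delta>. \<exists>a\<in>A. \<gamma> \<le> a)"

definition unbounded :: "'a::wellorder set \<Rightarrow> bool" where
  "unbounded A \<longleftrightarrow> (\<forall>\<gamma>. \<exists>a\<in>A. \<gamma> \<le> a)"

definition closed_set :: "'a::wellorder set \<Rightarrow> bool" where
  "closed_set C \<longleftrightarrow> (\<forall>\<delta>. is_limit \<delta> \<and> cofinal_in (C \<inter> {..<\<delta>}) \<delta> \<longrightarrow> \<delta> \<in> C)"

definition club :: "'a::wellorder set \<Rightarrow> bool" where
  "club C \<longleftrightarrow> closed_set C \<and> unbounded C"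

definition stationary :: "'a::wellorder set \<Rightarrow> bool" where
  "stationary S \<longleftrightarrow> (\<forall>C. club C \<longrightarrow> S \<inter> C \<noteq> {})"

definition superclub_seq :: "('a::wellorder \<Rightarrow> 'a set) \<Rightarrow> bool" where
  "superclub_seq A \<longleftrightarrow>
     (\<forall>\<delta>. is_limit \<delta> \<longrightarrow> cofinal_in (A \<delta>) \<delta>) \<and>
     (\<forall>x. unbounded x \<longrightarrow>
        (\<exists>y. y \<subseteq> x \<and> unbounded y \<and>
             stationary {\<delta>. is_limit \<delta> \<and> y \<inter> {..<\<delta>} = A \<delta>}))"

definition superclub :: "'a::wellorder itself \<Rightarrow> bool" where
  "superclub _ \<longleftrightarrow> (\<exists>A :: 'a \<Rightarrow> 'a set. superclub_seq A)"

end

theory Submission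
  imports Defs
begin


lemma inj_prod_into:
  assumes "infinite (UNIV::'a set)"
  shows "\<exists>g::'a\<times>nat \<Rightarrow> 'a. inj g"
proof -
  obtain e :: "nat \<Rightarrow> 'a" where e: "inj e" using assms infinite_countable_subset by blast
  have "(card_of (UNIV :: ('a\<times>'a) set), card_of (UNIV::'a set)) \<in> ordIso"
    using card_of_Times_same_infinite[OF assms] by (simp only: UNIV_Times_UNIV)
  then obtain h :: "'a\<times>'a \<Rightarrow> 'a" where h: "bij_betw h UNIV UNIV"
    using card_of_ordIso[of "UNIV :: ('a\<times>'a) set" "UNIV::'a set"] by blast
  have "inj (\<lambda>(a,n). h (a, e n))"
  proof (rule injI)
    fix x y :: "'a\<times>nat" assume "(\<lambda>(a,n). h (a, e n)) x = (\<lambda>(a,n). h (a, e n)) y"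
    then have "h (fst x, e (snd x)) = h (fst y, e (snd y))" by (simp add: case_prod_beta)
    then have "(fst x, e (snd x)) = (fst y, e (snd y))" using h by (simp add: bij_betw_def inj_eq)
    then show "x = y" using e by (simp add: inj_eq prod_eq_iff)
  qed
  thus ?thesis by blast
qed



lemma om1_nomax:
  assumes "is_omega1_type TYPE('a::wellorder)"
  shows "\<exists>\<eta>. (\<gamma>::'a) < \<eta>"
proof (rule ccontr)
  assume "\<nexists>\<eta>. \<gamma> < \<eta>"
  then have "UNIV \<subseteq> insert \<gamma> {..<\<gamma>}" using not_less_iff_gr_or_eq by auto
  moreover have "countable (insert \<gamma> {..<\<gamma>})" using assms unfolding is_omega1_type_def by auto
  ultimately show False using assms countable_subset unfolding is_omega1_type_def by blast
qed

lemma om1_bounded: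
  assumes "is_omega1_type TYPE('a::wellorder)" and "countable (K::'a set)"
  shows "\<exists>b. \<forall>x\<in>K. x < b"
proof (rule ccontr)
  assume "\<not> ?thesis"
  then have "\<forall>b. \<exists>x\<in>K. b \<le> x" by (meson not_less)
  then have "UNIV \<subseteq> (\<Union>x\<in>K. insert x {..<x})" by (auto simp: le_less)
  moreover have "countable (\<Union>x\<in>K. insert x {..<x})"
    using assms unfolding is_omega1_type_def by auto
  ultimately show False using assms countable_subset unfolding is_omega1_type_def by blast
qed

lemma om1_sdr:
  assumes "is_omega1_type TYPE('a::wellorder)"
    and "\<And>a K. countable K \<Longrightarrow> X a - K \<noteq> {}"
  shows "\<exists>g::'a\<Rightarrow>'c. inj g \<and> (\<forall>a. g a \<in> X a)"
proof -
  define R :: "('a\<times>'a) set" where "R = {(x,y). x<y}"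
  define H where "H = (\<lambda>(f::'a\<Rightarrow>'c) a. SOME x. x \<in> X a - f ` {..<a})"
  define g where "g = wfrec R H"
  have wfR: "wf R" unfolding R_def by (rule wf)
  have key: "g a \<in> X a - g ` {..<a}" for a
  proof -
    have "g a = H (cut g R a) a" unfolding g_def by (rule wfrec[OF wfR])
    moreover have "cut g R a ` {..<a} = g ` {..<a}"
      by (auto simp: cut_apply R_def image_def)
    moreover have "countable (g ` {..<a})" using assms(1) unfolding is_omega1_type_def by auto
    then have "\<exists>x. x \<in> X a - g ` {..<a}" using assms(2) by blast
    ultimately show ?thesis unfolding H_def by (metis (no_types, lifting) someI_ex)
  qed
  have "inj g"
  proof (rule injI)
    fix x y assume e: "g x = g y"
    show "x = y"
    proof (rule ccontr)
      assume "x \<noteq> y"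
      then consider "x < y" | "y < x" by (meson linorder_neqE)
      then show False
      proof cases
        case 1 then have "g x \<in> g ` {..<y}" by auto
        then show False using key[of y] e by auto
      next
        case 2 then have "g y \<in> g ` {..<x}" by auto
        then show False using key[of x] e by auto
      qed
    qed
  qed
  then show ?thesis using key by blast
qed

lemma om1_seq:
  assumes "is_omega1_type TYPE('a::wellorder)" and inc: "\<And>k. (t::nat\<Rightarrow>'a) k < t (Suc k)"
  shows "\<exists>\<sigma>. is_limit \<sigma> \<and> (\<forall>k. t k < \<sigma>) \<and> (\<forall>\<gamma><\<sigma>. \<exists>k. \<gamma> < t k) \<and>
     (\<forall>E. (\<forall>k. \<exists>m\<ge>k. t m \<in> E) \<longrightarrow> cofinal_in (E \<inter> {..<\<sigma>}) \<sigma>)"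
proof -
  have "countable (range t)" by simp
  from om1_bounded[OF assms(1) this] obtain b where b: "\<forall>x\<in>range t. x < b" by blast
  define \<sigma> where "\<sigma> = (LEAST b. \<forall>k. t k < b)"
  have s1: "\<forall>k. t k < \<sigma>" unfolding \<sigma>_def
  proof (rule LeastI[of _ b])
    show "\<forall>k. t k < b" using b by simp
  qed
  have s2: "\<exists>k. \<gamma> < t k" if "\<gamma> < \<sigma>" for \<gamma>
  proof (rule ccontr)
    assume "\<nexists>k. \<gamma> < t k"
    then have "\<forall>k. t k \<le> \<gamma>" by (meson not_less)
    then have "\<forall>k. t k < \<gamma>" using inc by (meson order_less_le_trans)
    then have "\<sigma> \<le> \<gamma>" unfolding \<sigma>_def by (rule Least_le)
    then show False using that by simp
  qed
  have mono: "t k \<le> t m" if "k \<le> m" for k m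
  proof (rule lift_Suc_mono_le[of t])
    show "t n \<le> t (Suc n)" for n using inc[of n] by (rule less_imp_le)
  qed (fact that)
  have lim: "is_limit \<sigma>"
    unfolding is_limit_def
  proof (intro conjI allI impI)
    have "t 0 < \<sigma>" using s1 by simp
    then show "\<exists>\<gamma>. \<gamma> < \<sigma>" by blast
  next
    fix \<gamma> assume "\<gamma> < \<sigma>"
    then obtain k where "\<gamma> < t k" using s2 by blast
    moreover have "t k < \<sigma>" using s1 by simp
    ultimately show "\<exists>\<eta>. \<gamma> < \<eta> \<and> \<eta> < \<sigma>" by blast
  qed
  have cof: "cofinal_in (E \<inter> {..<\<sigma>}) \<sigma>" if fr: "\<forall>k. \<exists>m\<ge>k. t m \<in> E" for E
    unfolding cofinal_in_def
  proof safe
    fix \<gamma> assume "\<gamma> < \<sigma>"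
    then obtain k where k: "\<gamma> < t k" using s2 by blast
    obtain m where m: "m \<ge> k" "t m \<in> E" using fr by blast
    have "\<gamma> \<le> t m" using k mono[OF m(1)] by (simp add: less_imp_le order_less_le_trans)
    moreover have "t m < \<sigma>" using s1 by blast
    ultimately show "\<exists>a\<in>E \<inter> {..<\<sigma>}. \<gamma> \<le> a" using m(2) by blast
  qed
  show ?thesis using lim s1 s2 cof by blast
qed

lemma club_gt:
  assumes "is_omega1_type TYPE('a::wellorder)" and "club (E::'a set)"
  shows "\<exists>a\<in>E. \<gamma> < a"
proof -
  obtain \<eta> where "\<gamma> < \<eta>" using om1_nomax[OF assms(1)] by blast
  moreover obtain a where "a \<in> E" "\<eta> \<le> a" using assms(2) unfolding club_def unbounded_def by blast
  ultimately show ?thesis by (meson less_le_trans)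
qed

lemma closedI_seq:
  assumes "closed_set E" "is_limit \<sigma>" "cofinal_in (E \<inter> {..<\<sigma>}) \<sigma>"
  shows "\<sigma> \<in> E"
  using assms unfolding closed_set_def by blast

lemma countable_inter_unb:
  assumes "is_omega1_type TYPE('a::wellorder)" and "\<F> \<noteq> {}" "countable \<F>"
    and "\<forall>E\<in>\<F>. club (E::'a set)"
  shows "\<exists>a\<in>\<Inter>\<F>. \<gamma> < a"
proof -
  define e where "e = from_nat_into \<F>"
  have re: "range e = \<F>" unfolding e_def using assms(2,3) by (simp add: range_from_nat_into)
  define t where "t = rec_nat \<gamma> (\<lambda>k x. SOME y. x < y \<and> y \<in> e (fst (prod_decode k)))"
  have t0: "t 0 = \<gamma>" unfolding t_def by simp
  have tS: "t k < t (Suc k) \<and> t (Suc k) \<in> e (fst (prod_decode k))" for k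
  proof -
    have "club (e (fst (prod_decode k)))" using re assms(4) by auto
    then have "\<exists>y. t k < y \<and> y \<in> e (fst (prod_decode k))" using club_gt[OF assms(1)] by blast
    then have "t k < (SOME y. t k < y \<and> y \<in> e (fst (prod_decode k))) \<and> (SOME y. t k < y \<and> y \<in> e (fst (prod_decode k))) \<in> e (fst (prod_decode k))"
      by (rule someI_ex)
    moreover have "t (Suc k) = (SOME y. t k < y \<and> y \<in> e (fst (prod_decode k)))" unfolding t_def by simp
    ultimately show ?thesis by simp
  qed
  obtain \<sigma> where s: "is_limit \<sigma>" "\<forall>k. t k < \<sigma>"
    "\<forall>E. (\<forall>k. \<exists>m\<ge>k. t m \<in> E) \<longrightarrow> cofinal_in (E \<inter> {..<\<sigma>}) \<sigma>"
    using om1_seq[OF assms(1), of t] tS by blast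
  have "\<sigma> \<in> e i" for i
  proof -
    have "\<forall>k. \<exists>m\<ge>k. t m \<in> e i"
    proof
      fix k
      have "k \<le> prod_encode (i,k)" by (rule le_prod_encode_2)
      then show "\<exists>m\<ge>k. t m \<in> e i"
        using tS[of "prod_encode (i,k)"] by (intro exI[of _ "Suc (prod_encode (i,k))"]) auto
    qed
    moreover have "club (e i)" using re assms(4) by auto
    ultimately show ?thesis using s closedI_seq unfolding club_def by blast
  qed
  then have "\<sigma> \<in> \<Inter>\<F>" using re by auto
  moreover have "\<gamma> < \<sigma>" using s(2) t0 by metis
  ultimately show ?thesis by blast
qed


lemma diag_unb:
  assumes om1: "is_omega1_type TYPE('a::wellorder)" and "club (Cs::'a set)" and "\<forall>\<delta>. club (Cd \<delta>)"
  shows "\<exists>a\<in>Cs \<inter> {\<gamma>. \<forall>\<delta><\<gamma>. \<gamma> \<in> Cd \<delta>}. \<gamma>0 < a"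
proof -
  define F where "F x = insert Cs (Cd ` {..<x})" for x
  have Fc: "\<exists>y. x < y \<and> y \<in> \<Inter>(F x)" for x
  proof -
    have "countable (F x)" using om1 unfolding F_def is_omega1_type_def by auto
    moreover have "F x \<noteq> {}" "\<forall>E\<in>F x. club E" using assms unfolding F_def by auto
    ultimately show ?thesis using countable_inter_unb[OF om1] by blast
  qed
  define t where "t = rec_nat \<gamma>0 (\<lambda>k x. SOME y. x < y \<and> y \<in> \<Inter>(F x))"
  have t0: "t 0 = \<gamma>0" unfolding t_def by simp
  have tS: "t k < t (Suc k) \<and> t (Suc k) \<in> \<Inter>(F (t k))" for k
  proof -
    have "t k < (SOME y. t k < y \<and> y \<in> \<Inter>(F (t k))) \<and> (SOME y. t k < y \<and> y \<in> \<Inter>(F (t k))) \<in> \<Inter>(F (t k))"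
      using Fc by (rule someI_ex)
    moreover have "t (Suc k) = (SOME y. t k < y \<and> y \<in> \<Inter>(F (t k)))" unfolding t_def by simp
    ultimately show ?thesis by simp
  qed
  have mono: "t k \<le> t m" if "k \<le> m" for k m
  proof (rule lift_Suc_mono_le[of t])
    show "t n \<le> t (Suc n)" for n using tS[of n] by (simp add: less_imp_le)
  qed (fact that)
  obtain \<sigma> where s: "is_limit \<sigma>" "\<forall>k. t k < \<sigma>" "\<forall>\<gamma><\<sigma>. \<exists>k. \<gamma> < t k"
    "\<forall>E. (\<forall>k. \<exists>m\<ge>k. t m \<in> E) \<longrightarrow> cofinal_in (E \<inter> {..<\<sigma>}) \<sigma>"
    using om1_seq[OF om1, of t] tS by blast
  have "\<forall>k. \<exists>m\<ge>k. t m \<in> Cs"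
  proof
    fix k show "\<exists>m\<ge>k. t m \<in> Cs" using tS[of k] unfolding F_def by (intro exI[of _ "Suc k"]) auto
  qed
  then have "\<sigma> \<in> Cs" using s assms(2) closedI_seq unfolding club_def by blast
  moreover have "\<sigma> \<in> Cd \<delta>" if dl: "\<delta> < \<sigma>" for \<delta>
  proof -
    obtain k where k: "\<delta> < t k" using s(3) dl by blast
    have "\<forall>j. \<exists>m\<ge>j. t m \<in> Cd \<delta>"
    proof
      fix j
      have "t k \<le> t (max j k)" by (rule mono) simp
      then have "\<delta> < t (max j k)" using k by simp
      then have "t (Suc (max j k)) \<in> Cd \<delta>" using tS[of "max j k"] unfolding F_def by auto
      then show "\<exists>m\<ge>j. t m \<in> Cd \<delta>" by (intro exI[of _ "Suc (max j k)"]) auto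
    qed
    then show ?thesis using s assms(3) closedI_seq unfolding club_def by blast
  qed
  moreover have "\<gamma>0 < \<sigma>" using s(2) t0 by metis
  ultimately show ?thesis by blast
qed


theorem mainTheorem10:
  fixes C :: "'b::wellorder \<Rightarrow> 'a::wellorder set"
  assumes "is_omega1_type TYPE('a)"
    and "is_omega2_type TYPE('b) TYPE('a)"
    and "superclub TYPE('a)"
    and "\<forall>\<alpha>. club (C \<alpha>)"
  shows "\<exists>\<beta> :: 'a \<Rightarrow> 'b. inj \<beta> \<and> club (\<Inter>\<xi>. C (\<beta> \<xi>))"
proof -
  note om1 = assms(1)
  have no_inj: "\<not> (\<exists>f::'b \<Rightarrow> 'a. inj f)" using assms(2) unfolding is_omega2_type_def by blast
  have infa: "infinite (UNIV::'a set)" using om1 countable_finite unfolding is_omega1_type_def by blast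
  obtain A :: "'a \<Rightarrow> 'a set" where A: "superclub_seq A" using assms(3) unfolding superclub_def by blast
  define I where "I \<delta> = {\<alpha>. A \<delta> \<subseteq> C \<alpha>}" for \<delta>
  have uncb: "uncountable (UNIV::'b set)"
  proof
    assume "countable (UNIV::'b set)"
    then have i1: "inj (to_nat_on (UNIV::'b set))" by (rule inj_on_to_nat_on)
    obtain e :: "nat \<Rightarrow> 'a" where e: "inj e" using infa infinite_countable_subset by blast
    have "inj (e \<circ> to_nat_on (UNIV::'b set))" by (rule inj_compose[OF e i1])
    then show False using no_inj by blast
  qed
  obtain \<alpha>s where as: "\<forall>\<delta>. \<alpha>s \<in> I \<delta> \<longrightarrow> uncountable (I \<delta>)"
  proof (rule ccontr)
    assume "\<not> thesis"
    with that have "\<forall>\<alpha>. \<exists>\<delta>. \<alpha> \<in> I \<delta> \<and> countable (I \<delta>)" by blast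
    then obtain d where d: "\<forall>\<alpha>. \<alpha> \<in> I (d \<alpha>) \<and> countable (I (d \<alpha>))" by metis
    define h where "h \<alpha> = (d \<alpha>, to_nat_on (I (d \<alpha>)) \<alpha>)" for \<alpha>
    have ih: "inj h"
    proof (rule injI)
      fix x y assume "h x = h y"
      then have "d x = d y" "to_nat_on (I (d x)) x = to_nat_on (I (d x)) y" unfolding h_def by auto
      moreover have "inj_on (to_nat_on (I (d x))) (I (d x))" using d by auto
      ultimately show "x = y" using d by (metis inj_onD)
    qed
    obtain g :: "'a\<times>nat \<Rightarrow> 'a" where "inj g" using inj_prod_into[OF infa] by blast
    then have "inj (g \<circ> h)" using ih by (simp add: inj_compose)
    then show False using no_inj by blast
  qed
  define good where "good \<delta> \<longleftrightarrow> is_limit \<delta> \<and> uncountable (I \<delta>)" for \<delta>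
  define X where "X \<delta> = (if good \<delta> then I \<delta> else UNIV)" for \<delta>
  have "X a - K \<noteq> {}" if "countable K" for a K
  proof
    assume "X a - K = {}"
    then have "X a \<subseteq> K" by blast
    then have "countable (X a)" using that countable_subset by blast
    then show False using uncb unfolding X_def good_def by (auto split: if_splits)
  qed
  then obtain \<beta>0 :: "'a \<Rightarrow> 'b" where b0: "inj \<beta>0" "\<forall>a. \<beta>0 a \<in> X a"
    using om1_sdr[OF om1, of X] by blast
  define Cd where "Cd \<delta> = (if good \<delta> then C (\<beta>0 \<delta>) else UNIV)" for \<delta>
  have cU: "club (UNIV::'a set)" unfolding club_def closed_set_def unbounded_def by auto
  have cCd: "\<forall>\<delta>. club (Cd \<delta>)" using cU assms(4) unfolding Cd_def by auto
  define x where "x = C \<alpha>s \<inter> {\<gamma>. \<forall>\<delta><\<gamma>. \<gamma> \<in> Cd \<delta>}"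
  have "unbounded x" unfolding unbounded_def
  proof
    fix \<gamma> show "\<exists>a\<in>x. \<gamma> \<le> a"
      using diag_unb[OF om1 _ cCd, of "C \<alpha>s" \<gamma>] assms(4) unfolding x_def by (meson less_imp_le)
  qed
  then obtain y where y: "y \<subseteq> x" "unbounded y"
    and st: "stationary {\<delta>. is_limit \<delta> \<and> y \<inter> {..<\<delta>} = A \<delta>}"
    using A unfolding superclub_seq_def by blast
  define S where "S = {\<delta>. is_limit \<delta> \<and> y \<inter> {..<\<delta>} = A \<delta>}"
  have Sunb: "\<exists>\<delta>\<in>S. \<gamma> \<le> \<delta>" for \<gamma>
  proof -
    have "club {\<eta>. \<gamma> \<le> \<eta>}" unfolding club_def closed_set_def unbounded_def
    proof safe
      fix \<delta> assume "is_limit \<delta>" "cofinal_in ({\<eta>. \<gamma> \<le> \<eta>} \<inter> {..<\<delta>}) \<delta>"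
      then show "\<gamma> \<le> \<delta>" unfolding is_limit_def cofinal_in_def by fastforce
    next
      fix \<gamma>' show "\<exists>a\<in>{\<eta>. \<gamma> \<le> \<eta>}. \<gamma>' \<le> a" by (intro bexI[of _ "max \<gamma> \<gamma>'"]) auto
    qed
    then show ?thesis using st unfolding stationary_def S_def by blast
  qed
  have uS: "uncountable S"
  proof
    assume "countable S"
    then obtain b where "\<forall>s\<in>S. s < b" using om1_bounded[OF om1] by blast
    then show False using Sunb[of b] by (meson not_less)
  qed
  have "S - K \<noteq> {}" if "countable K" for K :: "'a set"
    using that uS countable_subset by (metis Diff_eq_empty_iff)
  then obtain f :: "'a \<Rightarrow> 'a" where f: "inj f" "\<forall>a. f a \<in> S"
    using om1_sdr[OF om1, of "\<lambda>_. S"] by blast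
  have gS: "good \<delta> \<and> y \<subseteq> C (\<beta>0 \<delta>)" if dS: "\<delta> \<in> S" for \<delta>
  proof -
    have lim: "is_limit \<delta>" and Ad: "A \<delta> = y \<inter> {..<\<delta>}" using dS unfolding S_def by auto
    have "A \<delta> \<subseteq> C \<alpha>s" using Ad y(1) unfolding x_def by auto
    then have g: "good \<delta>" using as lim unfolding good_def I_def by auto
    then have "\<beta>0 \<delta> \<in> I \<delta>" using b0(2) unfolding X_def by metis
    then have AC: "A \<delta> \<subseteq> C (\<beta>0 \<delta>)" unfolding I_def by simp
    have "a \<in> C (\<beta>0 \<delta>)" if ay: "a \<in> y" for a
    proof (cases a \<delta> rule: linorder_cases)
      case less then show ?thesis using AC Ad ay by auto
    next
      case greater
      have "a \<in> x" using ay y(1) by blast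
      then have "a \<in> Cd \<delta>" using greater unfolding x_def by blast
      then show ?thesis using g unfolding Cd_def by simp
    next
      case equal
      have "cofinal_in (A \<delta>) \<delta>" using A lim unfolding superclub_seq_def by blast
      then have "cofinal_in (C (\<beta>0 \<delta>) \<inter> {..<\<delta>}) \<delta>" using AC unfolding cofinal_in_def by blast
      then have "\<delta> \<in> C (\<beta>0 \<delta>)" using assms(4) lim closedI_seq unfolding club_def by blast
      then show ?thesis using equal by simp
    qed
    then show ?thesis using g by blast
  qed
  define \<beta> where "\<beta> = \<beta>0 \<circ> f"
  have "inj \<beta>" unfolding \<beta>_def using b0(1) f(1) by (simp add: inj_compose)
  moreover have "closed_set (\<Inter>\<xi>. C (\<beta> \<xi>))" unfolding closed_set_def
  proof safe
    fix \<delta> \<xi> assume l: "is_limit \<delta>" and c: "cofinal_in ((\<Inter>\<xi>. C (\<beta> \<xi>)) \<inter> {..<\<delta>}) \<delta>"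
    then have "cofinal_in (C (\<beta> \<xi>) \<inter> {..<\<delta>}) \<delta>" unfolding cofinal_in_def by blast
    then show "\<delta> \<in> C (\<beta> \<xi>)" using l assms(4) closedI_seq unfolding club_def by blast
  qed
  moreover have "unbounded (\<Inter>\<xi>. C (\<beta> \<xi>))"
  proof -
    have "y \<subseteq> (\<Inter>\<xi>. C (\<beta> \<xi>))" using gS f(2) unfolding \<beta>_def by auto
    then show ?thesis using y(2) unfolding unbounded_def by blast
  qed
  ultimately show ?thesis unfolding club_def by blast
qed

end
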